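(* Let $\Phi=(G,\varphi)$ be a complex unit gain graph of order $n$. Then $$r(G)-2\theta(G)\leq r(\Phi)\leq r(G)+2\theta(G).$$
   Context: A complex unit gain graph ($\mathbb{T}$-gain graph) $\Phi=(G,\varphi)$ consists of a finite simple graph $G$ (the underlying graph) with vertex set $\{v_1,\dots,v_n\}$ and a gain function $\varphi$ assigning to each oriented edge $e_{ij}$ (from $v_i$ to $v_j$, where $v_iv_j\in E(G)$) a complex number $\varphi(e_{ij})$ of modulus $1$, with $\varphi(e_{ji})=\varphi(e_{ij})^{-1}=\overline{\varphi(e_{ij})}$. The adjacency matrix $A(\Phi)$ is the $n\times n$ Hermitian matrix whose $(i,j)$ entry is $\varphi(e_{ij})$ if $v_iv_j\in E(G)$ and $0$ otherwise; $r(\Phi)$ denotes the rank of $A(\Phi)$. $r(G)$ denotes the rank of the ($0$-$1$) adjacency matrix of $G$. $\theta(G)=|E(G)|-|V(G)|+\omega(G)$ is the dimension of the cycle space of $G$, where $\omega(G)$ is the number of connected components of $G$. *)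

theory Defs
  imports "HOL-Analysis.Analysis"
begin

text \<open>A T-gain graph additionally has a gain function phi
on oriented edges with unit modulus and phi(e_ji) = conjugate (= inverse) of phi(e_ij).\<close>

definition simple_graph :: "('n \<Rightarrow> 'n \<Rightarrow> bool) \<Rightarrow> bool" where
  "simple_graph E \<longleftrightarrow> (\<forall>u v. E u v \<longrightarrow> E v u) \<and> (\<forall>u. \<not> E u u)"

definition unit_gain :: "('n \<Rightarrow> 'n \<Rightarrow> bool) \<Rightarrow> ('n \<Rightarrow> 'n \<Rightarrow> complex) \<Rightarrow> bool" where
  "unit_gain E \<phi> \<longleftrightarrow> (\<forall>u v. E u v \<longrightarrow> norm (\<phi> u v) = 1 \<and> \<phi> v u = inverse (\<phi> u v))"

definition adj_mat :: "('n::finite \<Rightarrow> 'n \<Rightarrow> bool) \<Rightarrow> real^'n^'n" where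
  "adj_mat E = (\<chi> i j. if E i j then 1 else 0)"

definition gain_adj_mat :: "('n::finite \<Rightarrow> 'n \<Rightarrow> bool) \<Rightarrow> ('n \<Rightarrow> 'n \<Rightarrow> complex) \<Rightarrow> complex^'n^'n" where
  "gain_adj_mat E \<phi> = (\<chi> i j. if E i j then \<phi> i j else 0)"

definition graph_edges :: "('n \<Rightarrow> 'n \<Rightarrow> bool) \<Rightarrow> 'n set set" where
  "graph_edges E = {{u, v} | u v. E u v}"

definition num_components :: "('n \<Rightarrow> 'n \<Rightarrow> bool) \<Rightarrow> nat" where
  "num_components E = card (UNIV // {(u, v). E\<^sup>*\<^sup>* u v})"

definition cyclomatic :: "('n::finite \<Rightarrow> 'n \<Rightarrow> bool) \<Rightarrow> int" where
  "cyclomatic E = int (card (graph_edges E)) - int CARD('n) + int (num_components E)"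

end

theory Submission
  imports Defs
begin


lemma rank_add_le:
  fixes A B :: "'a::field^'n^'m"
  shows "rank (A + B) \<le> rank A + rank B"
proof -
  obtain BA where BA: "BA \<subseteq> rows A" "vec.independent BA" "rows A \<subseteq> vec.span BA" "card BA = vec.dim (rows A)"
    using vec.basis_exists by blast
  obtain BB where BB: "BB \<subseteq> rows B" "vec.independent BB" "rows B \<subseteq> vec.span BB" "card BB = vec.dim (rows B)"
    using vec.basis_exists by blast
  have fin: "finite BA" "finite BB" using BA(2) BB(2) vec.finiteI_independent by blast+
  have "rows (A + B) \<subseteq> vec.span (BA \<union> BB)"
  proof
    fix x assume "x \<in> rows (A + B)"
    then obtain i where x: "x = row i (A + B)" by (auto simp: rows_def)
    have "x = row i A + row i B" unfolding x by (simp add: row_def vec_eq_iff)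
    moreover have "row i A \<in> vec.span (BA \<union> BB)"
      using BA(3) vec.span_mono[of BA "BA \<union> BB"] by (auto simp: rows_def)
    moreover have "row i B \<in> vec.span (BA \<union> BB)"
      using BB(3) vec.span_mono[of BB "BA \<union> BB"] by (auto simp: rows_def)
    ultimately show "x \<in> vec.span (BA \<union> BB)" by (simp add: vec.span_add)
  qed
  then have "vec.dim (rows (A + B)) \<le> card (BA \<union> BB)"
    using fin by (intro vec.dim_le_card) auto
  also have "\<dots> \<le> card BA + card BB" by (rule card_Un_le)
  finally show ?thesis unfolding row_rank_def_gen using BA BB by simp
qed

lemma rank_le_nonzero_rows:
  fixes X :: "'a::field^'n::finite^'m::finite"
  shows "rank X \<le> card {i. row i X \<noteq> 0}"
proof -
  let ?Z = "{i. row i X \<noteq> 0}"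
  have "rows X \<subseteq> vec.span ((\<lambda>i. row i X) ` ?Z)"
  proof
    fix x assume "x \<in> rows X"
    then obtain i where x: "x = row i X" by (auto simp: rows_def)
    show "x \<in> vec.span ((\<lambda>i. row i X) ` ?Z)"
    proof (cases "row i X = 0")
      case True then show ?thesis using x vec.span_zero by simp
    next
      case False then show ?thesis using x by (intro vec.span_base) auto
    qed
  qed
  then have "vec.dim (rows X) \<le> card ((\<lambda>i. row i X) ` ?Z)"
    by (intro vec.dim_le_card) auto
  also have "\<dots> \<le> card ?Z" by (rule card_image_le) auto
  finally show ?thesis unfolding row_rank_def_gen .
qed

lemma rank_zero_gen: "rank (0::'a::field^'n^'m) = 0"
proof -
  have "rank (0::'a::field^'n^'m) \<le> card {i::'m. row i (0::'a^'n^'m) \<noteq> 0}"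
    by (rule rank_le_nonzero_rows)
  also have "{i::'m. row i (0::'a^'n^'m) \<noteq> 0} = {}" by (auto simp: row_def vec_eq_iff)
  finally show ?thesis by simp
qed

lemma rank_supp:
  fixes B :: "'n::finite set set"
  assumes "finite B"
  shows "(\<forall>i j. X$i$j \<noteq> 0 \<longrightarrow> {i,j} \<in> B) \<Longrightarrow> rank (X::'a::field^'n^'n) \<le> 2 * card B"
  using assms
proof (induction B arbitrary: X rule: finite_induct)
  case empty
  then have "X = 0" by (auto simp: vec_eq_iff)
  then show ?case by (simp add: rank_zero_gen)
next
  case (insert e F)
  define X1 where "X1 = (\<chi> i j. if {i,j} = e then X$i$j else 0)"
  define X2 where "X2 = (\<chi> i j. if {i,j} = e then 0 else X$i$j)"
  have X: "X = X1 + X2" by (simp add: X1_def X2_def vec_eq_iff)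
  have "rank X2 \<le> 2 * card F"
    using insert.prems by (intro insert.IH) (auto simp: X2_def)
  moreover have "rank X1 \<le> 2"
  proof -
    have "{i. row i X1 \<noteq> 0} \<subseteq> {i. \<exists>j. {i,j} = e}"
      by (auto simp: X1_def row_def vec_eq_iff split: if_splits)
    moreover have "card {i. \<exists>j. {i,j} = e} \<le> 2"
    proof (cases "\<exists>a b. e = {a,b}")
      case True
      then obtain a b where e: "e = {a,b}" by blast
      have "{i. \<exists>j. {i,j} = e} \<subseteq> {a,b}" using e by auto
      then have "card {i. \<exists>j. {i,j} = e} \<le> card {a,b}" by (intro card_mono) auto
      also have "\<dots> \<le> 2" by (simp add: card_insert_if)
      finally show ?thesis .
    next
      case False
      then have "{i. \<exists>j. {i,j} = e} = {}" by auto
      then show ?thesis by simp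
    qed
    ultimately have "card {i. row i X1 \<noteq> 0} \<le> 2"
      by (meson card_mono finite order_trans)
    then show ?thesis using rank_le_nonzero_rows[of X1] by linarith
  qed
  ultimately show ?case using rank_add_le[of X1 X2] X insert.hyps by simp
qed

lemma rank_rowscale_le:
  fixes M :: "'a::field^'n::finite^'m::finite"
  shows "rank (\<chi> i j. s i * M$i$j) \<le> rank M"
proof -
  have "rows (\<chi> i j. s i * M$i$j) \<subseteq> vec.span (rows M)"
  proof
    fix x assume "x \<in> rows (\<chi> i j. s i * M$i$j)"
    then obtain i where x: "x = row i (\<chi> i j. s i * M$i$j)" by (auto simp: rows_def)
    have "x = s i *s row i M" unfolding x by (simp add: row_def vec_eq_iff)
    moreover have "row i M \<in> vec.span (rows M)" by (intro vec.span_base) (auto simp: rows_def)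
    ultimately show "x \<in> vec.span (rows M)" by (simp add: vec.span_scale)
  qed
  then show ?thesis unfolding row_rank_def_gen by (rule vec.dim_mono)
qed

lemma rank_colscale_le:
  fixes M :: "'a::field^'n::finite^'m::finite"
  shows "rank (\<chi> i j. M$i$j * t j) \<le> rank M"
proof -
  define L where "L = (\<lambda>x::'a^'n. \<chi> j. x$j * t j)"
  have lin: "Vector_Spaces.linear (*s) (*s) L"
    by unfold_locales (simp_all add: L_def vec_eq_iff algebra_simps)
  have "rows (\<chi> i j. M$i$j * t j) = L ` rows M"
    by (auto simp: rows_def L_def row_def)
  then show ?thesis unfolding row_rank_def_gen using vec.dim_image_le[OF lin] by simp
qed

lemma rank_scale_eq:
  fixes M :: "'a::field^'n::finite^'m::finite"
  assumes "\<forall>i. s i \<noteq> 0" "\<forall>j. t j \<noteq> 0"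
  shows "rank (\<chi> i j. s i * M$i$j * t j) = rank M"
proof (rule antisym)
  let ?N = "\<chi> i j. s i * M$i$j * t j"
  have "rank ?N \<le> rank (\<chi> i j. M$i$j * t j)"
    using rank_rowscale_le[of s "\<chi> i j. M$i$j * t j"] by (simp add: mult.assoc)
  then show "rank ?N \<le> rank M" using rank_colscale_le[of M t] by linarith
  have eqM: "M = (\<chi> i j. inverse (s i) * (\<chi> i j. ?N$i$j * inverse (t j))$i$j)"
  proof -
    have "\<And>i j. inverse (s i) * (s i * M$i$j * t j * inverse (t j)) = M$i$j"
      using assms by (simp add: mult.assoc)
    then show ?thesis unfolding vec_eq_iff by simp
  qed
  then have "rank M \<le> rank (\<chi> i j. ?N$i$j * inverse (t j))"
    by (subst eqM) (rule rank_rowscale_le)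
  also have "\<dots> \<le> rank ?N" by (rule rank_colscale_le)
  finally show "rank M \<le> rank ?N" .
qed

lemma rank_of_real:
  fixes A :: "real^'n::finite^'m::finite"
  shows "rank (\<chi> i j. complex_of_real (A$i$j)) = rank A"
proof -
  define C where "C = (\<lambda>x::real^'n. (\<chi> i. complex_of_real (x$i)) :: complex^'n)"
  have injC: "inj C" by (auto simp: inj_def C_def vec_eq_iff)
  have rowsC: "rows (\<chi> i j. complex_of_real (A$i$j)) = C ` rows A"
    by (auto simp: rows_def C_def row_def)
  obtain BA where BA: "BA \<subseteq> rows A" "vec.independent BA" "rows A \<subseteq> vec.span BA" "card BA = vec.dim (rows A)"
    using vec.basis_exists by blast
  have fin: "finite BA" using BA(2) vec.finiteI_independent by blast
  have sub: "C ` rows A \<subseteq> vec.span (C ` BA)"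
  proof
    fix y assume "y \<in> C ` rows A"
    then obtain x where x: "x \<in> rows A" "y = C x" by blast
    then have "x \<in> vec.span BA" using BA(3) by blast
    then obtain u where u: "x = (\<Sum>v\<in>BA. u v *s v)" using vec.span_finite[OF fin] by blast
    have "C x = (\<Sum>v\<in>BA. complex_of_real (u v) *s C v)"
      unfolding u by (simp add: C_def vec_eq_iff sum_component)
    also have "\<dots> \<in> vec.span (C ` BA)"
      by (intro vec.span_sum vec.span_scale vec.span_base) auto
    finally show "y \<in> vec.span (C ` BA)" using x by simp
  qed
  have ind: "vec.independent (C ` BA)"
  proof (rule vec.independent_if_scalars_zero)
    show "finite (C ` BA)" using fin by simp
    fix f and y :: "complex^'n"
    assume sum0: "(\<Sum>x\<in>C ` BA. f x *s x) = 0" and y: "y \<in> C ` BA"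
    have s0: "(\<Sum>b\<in>BA. f (C b) *s C b) = 0"
      using sum0 by (simp add: sum.reindex inj_on_subset[OF injC])
    have re0: "(\<Sum>b\<in>BA. Re (f (C b)) *s b) = 0"
    proof -
      have "\<And>i. (\<Sum>b\<in>BA. f (C b) * complex_of_real (b$i)) = 0"
        using s0 by (simp add: vec_eq_iff sum_component C_def)
      then have "\<And>i. Re (\<Sum>b\<in>BA. f (C b) * complex_of_real (b$i)) = 0" by simp
      then have "\<And>i. (\<Sum>b\<in>BA. Re (f (C b)) * b$i) = 0" by (simp add: Re_sum)
      then show ?thesis by (simp add: vec_eq_iff sum_component)
    qed
    have im0: "(\<Sum>b\<in>BA. Im (f (C b)) *s b) = 0"
    proof -
      have "\<And>i. (\<Sum>b\<in>BA. f (C b) * complex_of_real (b$i)) = 0"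
        using s0 by (simp add: vec_eq_iff sum_component C_def)
      then have "\<And>i. Im (\<Sum>b\<in>BA. f (C b) * complex_of_real (b$i)) = 0" by simp
      then have "\<And>i. (\<Sum>b\<in>BA. Im (f (C b)) * b$i) = 0" by (simp add: Im_sum)
      then show ?thesis by (simp add: vec_eq_iff sum_component)
    qed
    obtain b where b: "b \<in> BA" "y = C b" using y by blast
    have "Re (f (C b)) = 0"
    proof (rule ccontr)
      assume nz: "Re (f (C b)) \<noteq> 0"
      have "vec.dependent BA" unfolding vec.dependent_finite[OF fin]
        by (rule exI[of _ "\<lambda>b. Re (f (C b))"]) (use re0 b(1) nz in auto)
      then show False using BA(2) by simp
    qed
    moreover have "Im (f (C b)) = 0"
    proof (rule ccontr)
      assume nz: "Im (f (C b)) \<noteq> 0"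
      have "vec.dependent BA" unfolding vec.dependent_finite[OF fin]
        by (rule exI[of _ "\<lambda>b. Im (f (C b))"]) (use im0 b(1) nz in auto)
      then show False using BA(2) by simp
    qed
    ultimately show "f y = 0" using b by (simp add: complex_eq_iff)
  qed
  have "vec.dim (C ` rows A) = card (C ` BA)"
    by (rule vec.dim_unique[OF _ sub ind refl]) (use BA(1) in auto)
  also have "\<dots> = card BA" using inj_on_subset[OF injC] by (simp add: card_image)
  finally show ?thesis unfolding row_rank_def_gen rowsC using BA(4) by simp
qed



lemma equiv_reach:
  assumes "\<forall>u v. E u v \<longrightarrow> E v u"
  shows "equiv UNIV {(u, v). E\<^sup>*\<^sup>* u v}"
proof -
  have "symp E" using assms by (auto simp: symp_def)
  then have s: "symp E\<^sup>*\<^sup>*" by (rule symp_rtranclp)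
  show ?thesis unfolding equiv_def refl_on_def sym_def trans_def
    using s by (auto simp: symp_def)
qed

lemma reach_add_edge:
  assumes A: "\<forall>x y. E x y \<longrightarrow> E' x y \<or> (x = a \<and> y = b) \<or> (x = b \<and> y = a)"
  shows "E\<^sup>*\<^sup>* x y \<Longrightarrow> E'\<^sup>*\<^sup>* x y \<or> (E'\<^sup>*\<^sup>* x a \<and> E'\<^sup>*\<^sup>* b y) \<or> (E'\<^sup>*\<^sup>* x b \<and> E'\<^sup>*\<^sup>* a y)"
proof (induction rule: rtranclp_induct)
  case base
  then show ?case by simp
next
  case (step y z)
  from A step(2) have "E' y z \<or> (y = a \<and> z = b) \<or> (y = b \<and> z = a)" by blast
  then show ?case
  proof (elim disjE conjE)
    assume "E' y z" then show ?thesis using step(3)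
      by (meson rtranclp.rtrancl_into_rtrancl)
  next
    assume "y = a" "z = b" then show ?thesis using step(3) by auto
  next
    assume "y = b" "z = a" then show ?thesis using step(3) by auto
  qed
qed

lemma components_le:
  fixes E E' :: "'n::finite \<Rightarrow> 'n \<Rightarrow> bool"
  assumes symE: "\<forall>u v. E u v \<longrightarrow> E v u" and symE': "\<forall>u v. E' u v \<longrightarrow> E' v u"
    and sub: "\<And>x y. E' x y \<Longrightarrow> E x y"
    and addE: "\<And>x y. E x y \<Longrightarrow> E' x y \<or> (x = a \<and> y = b) \<or> (x = b \<and> y = a)"
  shows "num_components E' \<le> num_components E + 1"
proof -
  have addA: "\<forall>x y. E x y \<longrightarrow> E' x y \<or> (x = a \<and> y = b) \<or> (x = b \<and> y = a)" using addE by blast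
  define R where "R = {(u, v). E\<^sup>*\<^sup>* u v}"
  define R' where "R' = {(u, v). E'\<^sup>*\<^sup>* u v}"
  have memR: "(x, y) \<in> R \<longleftrightarrow> E\<^sup>*\<^sup>* x y" for x y by (simp add: R_def)
  have memR': "(x, y) \<in> R' \<longleftrightarrow> E'\<^sup>*\<^sup>* x y" for x y by (simp add: R'_def)
  have eqR: "equiv UNIV R" unfolding R_def by (rule equiv_reach[OF symE])
  have eqR': "equiv UNIV R'" unfolding R'_def by (rule equiv_reach[OF symE'])
  have mono: "E'\<^sup>*\<^sup>* x y \<Longrightarrow> E\<^sup>*\<^sup>* x y" for x y
    by (induction rule: rtranclp_induct) (auto intro: rtranclp.rtrancl_into_rtrancl sub)
  define F where "F = (\<lambda>X. R `` X)"
  have img: "F (R' `` {x}) = R `` {x}" for x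
  proof
    show "F (R' `` {x}) \<subseteq> R `` {x}"
    proof
      fix z assume "z \<in> F (R' `` {x})"
      then obtain w where w: "(x, w) \<in> R'" "(w, z) \<in> R" unfolding F_def by blast
      then have "E\<^sup>*\<^sup>* x z" using mono memR memR' rtranclp_trans by metis
      then show "z \<in> R `` {x}" using memR by blast
    qed
    show "R `` {x} \<subseteq> F (R' `` {x})"
    proof
      fix z assume z: "z \<in> R `` {x}"
      have "(x, x) \<in> R'" using memR' by blast
      then show "z \<in> F (R' `` {x})" unfolding F_def using z by blast
    qed
  qed
  let ?Q = "UNIV // R' - {R' `` {b}}"
  have inj: "inj_on F ?Q"
  proof (rule inj_onI)
    fix X Y assume X: "X \<in> ?Q" and Y: "Y \<in> ?Q" and FXY: "F X = F Y"
    obtain x where x: "X = R' `` {x}" using X unfolding quotient_def by blast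
    obtain y where y: "Y = R' `` {y}" using Y unfolding quotient_def by blast
    have "R `` {x} = R `` {y}" using FXY img x y by simp
    then have "E\<^sup>*\<^sup>* x y" using eq_equiv_class_iff[OF eqR] memR by blast
    then have c: "E'\<^sup>*\<^sup>* x y \<or> (E'\<^sup>*\<^sup>* x a \<and> E'\<^sup>*\<^sup>* b y) \<or> (E'\<^sup>*\<^sup>* x b \<and> E'\<^sup>*\<^sup>* a y)"
      by (rule reach_add_edge[OF addA])
    have nb1: "\<not> E'\<^sup>*\<^sup>* x b"
    proof
      assume "E'\<^sup>*\<^sup>* x b"
      then have "R' `` {x} = R' `` {b}" using eq_equiv_class_iff[OF eqR'] memR' by blast
      then show False using X x by simp
    qed
    have nb2: "\<not> E'\<^sup>*\<^sup>* b y"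
    proof
      assume "E'\<^sup>*\<^sup>* b y"
      then have "R' `` {b} = R' `` {y}" using eq_equiv_class_iff[OF eqR'] memR' by blast
      then show False using Y y by simp
    qed
    have "E'\<^sup>*\<^sup>* x y" using c nb1 nb2 by blast
    then show "X = Y" using x y eq_equiv_class_iff[OF eqR'] memR' by blast
  qed
  have sub2: "F ` ?Q \<subseteq> UNIV // R"
  proof
    fix Z assume "Z \<in> F ` ?Q"
    then obtain x where "Z = F (R' `` {x})" unfolding quotient_def by blast
    then have "Z = R `` {x}" using img by simp
    then show "Z \<in> UNIV // R" unfolding quotient_def by blast
  qed
  have "card (UNIV // R') \<le> card ?Q + 1"
    using card_Diff_singleton_if[of "UNIV // R'" "R' `` {b}"] by (simp split: if_splits)
  also have "card ?Q = card (F ` ?Q)" using inj by (simp add: card_image)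
  also have "\<dots> \<le> card (UNIV // R)" by (rule card_mono[OF _ sub2]) simp
  finally show ?thesis unfolding num_components_def R_def R'_def by simp
qed

lemma components_eq:
  fixes E E' :: "'n::finite \<Rightarrow> 'n \<Rightarrow> bool"
  assumes symE': "\<forall>u v. E' u v \<longrightarrow> E' v u"
    and sub: "\<And>x y. E' x y \<Longrightarrow> E x y"
    and addE: "\<And>x y. E x y \<Longrightarrow> E' x y \<or> (x = a \<and> y = b) \<or> (x = b \<and> y = a)"
    and conn: "E'\<^sup>*\<^sup>* a b"
  shows "num_components E' = num_components E"
proof -
  have addA: "\<forall>x y. E x y \<longrightarrow> E' x y \<or> (x = a \<and> y = b) \<or> (x = b \<and> y = a)" using addE by blast
  have "symp E'" using symE' by (auto simp: symp_def)
  then have s: "symp E'\<^sup>*\<^sup>*" by (rule symp_rtranclp)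
  then have conn': "E'\<^sup>*\<^sup>* b a" using conn by (auto simp: symp_def)
  have "E\<^sup>*\<^sup>* x y \<longleftrightarrow> E'\<^sup>*\<^sup>* x y" for x y
  proof
    assume "E\<^sup>*\<^sup>* x y"
    then have "E'\<^sup>*\<^sup>* x y \<or> (E'\<^sup>*\<^sup>* x a \<and> E'\<^sup>*\<^sup>* b y) \<or> (E'\<^sup>*\<^sup>* x b \<and> E'\<^sup>*\<^sup>* a y)"
      by (rule reach_add_edge[OF addA])
    then show "E'\<^sup>*\<^sup>* x y"
    proof (elim disjE conjE)
      assume "E'\<^sup>*\<^sup>* x a" "E'\<^sup>*\<^sup>* b y"
      then show ?thesis using conn by (meson rtranclp_trans)
    next
      assume "E'\<^sup>*\<^sup>* x b" "E'\<^sup>*\<^sup>* a y"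
      then show ?thesis using conn' by (meson rtranclp_trans)
    qed
  next
    assume "E'\<^sup>*\<^sup>* x y"
    then show "E\<^sup>*\<^sup>* x y" using rtranclp_mono[of E' E] sub by (auto simp: le_fun_def)
  qed
  then have "E\<^sup>*\<^sup>* = E'\<^sup>*\<^sup>*" by (intro ext) blast
  then show ?thesis unfolding num_components_def by simp
qed

lemma components_empty:
  fixes E :: "'n::finite \<Rightarrow> 'n \<Rightarrow> bool"
  assumes "\<forall>x y. \<not> E x y"
  shows "num_components E = CARD('n)"
proof -
  have "E = (\<lambda>x y. False)" using assms by auto
  then have r: "E\<^sup>*\<^sup>* = (=)" by (auto simp: fun_eq_iff elim: rtranclp.cases)
  have "UNIV // {(u, v). E\<^sup>*\<^sup>* u v} = (\<lambda>x. {x}) ` UNIV"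
    unfolding r by (auto simp: quotient_def)
  then show ?thesis unfolding num_components_def by (simp add: card_image)
qed



lemma cnj_mult_self: "norm (z::complex) = 1 \<Longrightarrow> cnj z * z = 1"
  by (metis complex_norm_square mult.commute of_real_1 power_one)

lemma switching_aux:
  fixes \<phi> :: "'n::finite \<Rightarrow> 'n \<Rightarrow> complex"
  shows "\<forall>E::'n \<Rightarrow> 'n \<Rightarrow> bool. card (graph_edges E) = m \<longrightarrow> simple_graph E \<longrightarrow> unit_gain E \<phi> \<longrightarrow>
    (\<exists>s B. (\<forall>w. norm (s w) = 1) \<and> int (card B) \<le> cyclomatic E \<and>
       (\<forall>u v. E u v \<longrightarrow> {u,v} \<notin> B \<longrightarrow> cnj (s u) * \<phi> u v * s v = 1))"
proof (induction m)
  case 0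
  show ?case
  proof (intro allI impI)
    fix E :: "'n \<Rightarrow> 'n \<Rightarrow> bool"
    assume c: "card (graph_edges E) = 0"
    have "finite (graph_edges E)" by (rule finite)
    then have "graph_edges E = {}" using c card_0_eq by blast
    note ge0 = this
    then have noE: "\<forall>x y. \<not> E x y" unfolding graph_edges_def by blast
    have comp: "num_components E = CARD('n)" by (rule components_empty[OF noE])
    have "cyclomatic E = 0"
      unfolding cyclomatic_def ge0 comp by simp
    then show "\<exists>s B. (\<forall>w. norm (s w) = 1) \<and> int (card B) \<le> cyclomatic E \<and>
       (\<forall>u v. E u v \<longrightarrow> {u,v} \<notin> B \<longrightarrow> cnj (s u) * \<phi> u v * s v = 1)"
      using noE by (intro exI[of _ "\<lambda>_. 1"] exI[of _ "{}"]) simp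
  qed
next
  case (Suc m)
  show ?case
  proof (intro allI impI)
    fix E :: "'n \<Rightarrow> 'n \<Rightarrow> bool"
    assume c: "card (graph_edges E) = Suc m" and sg: "simple_graph E" and ug: "unit_gain E \<phi>"
    have symE: "\<forall>u v. E u v \<longrightarrow> E v u" and irrE: "\<forall>u. \<not> E u u"
      using sg by (auto simp: simple_graph_def)
    have "graph_edges E \<noteq> {}" using c by auto
    then obtain a b where ab: "E a b" unfolding graph_edges_def by blast
    have anb: "a \<noteq> b" using ab irrE by blast
    define E' where "E' = (\<lambda>x y. E x y \<and> {x,y} \<noteq> {a,b})"
    have sub: "\<And>x y. E' x y \<Longrightarrow> E x y" by (simp add: E'_def)
    have addE: "\<And>x y. E x y \<Longrightarrow> E' x y \<or> (x = a \<and> y = b) \<or> (x = b \<and> y = a)"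
      by (auto simp: E'_def doubleton_eq_iff)
    have symE': "\<forall>u v. E' u v \<longrightarrow> E' v u" unfolding E'_def using symE by (metis insert_commute)
    have sg': "simple_graph E'" unfolding simple_graph_def using symE' irrE sub by blast
    have ug': "unit_gain E' \<phi>" using ug sub unfolding unit_gain_def by blast
    have ge: "graph_edges E = insert {a,b} (graph_edges E')"
    proof
      show "graph_edges E \<subseteq> insert {a,b} (graph_edges E')"
      proof
        fix x assume "x \<in> graph_edges E"
        then obtain u v where x: "x = {u,v}" "E u v" unfolding graph_edges_def by blast
        from addE[OF x(2)] show "x \<in> insert {a,b} (graph_edges E')"
        proof (elim disjE conjE)
          assume "E' u v" then show ?thesis using x unfolding graph_edges_def by blast
        next
          assume "u = a" "v = b" then show ?thesis using x by simp
        next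
          assume "u = b" "v = a" then show ?thesis using x by (simp add: insert_commute)
        qed
      qed
      show "insert {a,b} (graph_edges E') \<subseteq> graph_edges E"
        using ab sub unfolding graph_edges_def by blast
    qed
    have nge: "{a,b} \<notin> graph_edges E'" unfolding graph_edges_def E'_def by blast
    have cE: "card (graph_edges E) = card (graph_edges E') + 1"
      unfolding ge using nge by simp
    then have c': "card (graph_edges E') = m" using c by simp
    obtain s' B' where s'1: "\<forall>w. norm (s' w) = 1" and B'c: "int (card B') \<le> cyclomatic E'"
      and s'g: "\<forall>u v. E' u v \<longrightarrow> {u,v} \<notin> B' \<longrightarrow> cnj (s' u) * \<phi> u v * s' v = 1"
      using Suc.IH c' sg' ug' by blast
    show "\<exists>s B. (\<forall>w. norm (s w) = 1) \<and> int (card B) \<le> cyclomatic E \<and>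
       (\<forall>u v. E u v \<longrightarrow> {u,v} \<notin> B \<longrightarrow> cnj (s u) * \<phi> u v * s v = 1)"
    proof (cases "E'\<^sup>*\<^sup>* a b")
      case True
      have "num_components E' = num_components E"
        by (rule components_eq[OF symE' sub addE True])
      then have cyc: "cyclomatic E = cyclomatic E' + 1"
        unfolding cyclomatic_def using cE by simp
      have "card (insert {a,b} B') \<le> card B' + 1" by (simp add: card_insert_if)
      then have "int (card (insert {a,b} B')) \<le> cyclomatic E" using B'c cyc by linarith
      moreover have "\<forall>u v. E u v \<longrightarrow> {u,v} \<notin> insert {a,b} B' \<longrightarrow> cnj (s' u) * \<phi> u v * s' v = 1"
        using s'g by (auto simp: E'_def)
      ultimately show ?thesis using s'1 by blast
    next
      case False
      have "num_components E' \<le> num_components E + 1"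
        by (rule components_le[OF symE symE' sub addE])
      then have cyc: "cyclomatic E' \<le> cyclomatic E"
        unfolding cyclomatic_def using cE by simp
      define X where "X = cnj (s' a) * \<phi> a b * s' b"
      have nphi: "norm (\<phi> a b) = 1" and phiba: "\<phi> b a = inverse (\<phi> a b)"
        using ug ab by (auto simp: unit_gain_def)
      have nX: "norm X = 1" using s'1 nphi by (simp add: X_def norm_mult)
      define C where "C = {w. E'\<^sup>*\<^sup>* a w}"
      have aC: "a \<in> C" by (simp add: C_def)
      have bC: "b \<notin> C" using False by (simp add: C_def)
      have closed: "E' u v \<Longrightarrow> (u \<in> C \<longleftrightarrow> v \<in> C)" for u v
      proof -
        assume e: "E' u v"
        then have e2: "E' v u" using symE' by blast
        show ?thesis unfolding C_def
          using e e2 rtranclp.rtrancl_into_rtrancl[of E' a u v] rtranclp.rtrancl_into_rtrancl[of E' a v u]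
          by blast
      qed
      define s where "s = (\<lambda>w. if w \<in> C then X * s' w else s' w)"
      have s1: "\<forall>w. norm (s w) = 1" using s'1 nX by (simp add: s_def norm_mult)
      have good: "cnj (s u) * \<phi> u v * s v = 1" if uv: "E u v" "{u,v} \<notin> B'" for u v
      proof (cases "E' u v")
        case True
        have g: "cnj (s' u) * \<phi> u v * s' v = 1" using s'g True uv(2) by blast
        show ?thesis
        proof (cases "u \<in> C")
          case True
          with closed[OF \<open>E' u v\<close>] have "v \<in> C" by blast
          then have "cnj (s u) * \<phi> u v * s v = (cnj X * X) * (cnj (s' u) * \<phi> u v * s' v)"
            using True by (simp add: s_def mult_ac)
          then show ?thesis using g cnj_mult_self[OF nX] by simp
        next
          case False
          with closed[OF \<open>E' u v\<close>] have "v \<notin> C" by blast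
          then show ?thesis using False g by (simp add: s_def)
        qed
      next
        case False
        then have "(u = a \<and> v = b) \<or> (u = b \<and> v = a)" using addE[OF uv(1)] by blast
        then show ?thesis
        proof
          assume "u = a \<and> v = b"
          then have "cnj (s u) * \<phi> u v * s v = cnj X * X"
            using aC bC by (simp add: s_def X_def mult_ac)
          then show ?thesis using cnj_mult_self[OF nX] by simp
        next
          assume uv': "u = b \<and> v = a"
          have nz: "\<phi> a b \<noteq> 0" using nphi by auto
          have "cnj (s u) * \<phi> u v * s v = (cnj (s' b) * s' b) * (cnj (s' a) * s' a) * (inverse (\<phi> a b) * \<phi> a b)"
            using aC bC uv' phiba by (simp add: s_def X_def mult_ac)
          then show ?thesis using cnj_mult_self s'1 nz by simp
        qed
      qed
      show ?thesis using s1 good B'c cyc by (intro exI[of _ s] exI[of _ B']) auto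
    qed
  qed
qed


theorem theorem3p2:
  fixes E :: "'n::finite \<Rightarrow> 'n \<Rightarrow> bool" and \<phi> :: "'n \<Rightarrow> 'n \<Rightarrow> complex"
  assumes "simple_graph E" and "unit_gain E \<phi>"
  shows "int (rank (adj_mat E)) - 2 * cyclomatic E \<le> int (rank (gain_adj_mat E \<phi>))
       \<and> int (rank (gain_adj_mat E \<phi>)) \<le> int (rank (adj_mat E)) + 2 * cyclomatic E"
proof -
  note ex = switching_aux[where \<phi>=\<phi> and m="card (graph_edges E)", THEN spec[of _ E], THEN mp, THEN mp, THEN mp, OF refl assms]
  obtain s B where s1: "\<forall>w. norm (s w) = 1" and Bc: "int (card B) \<le> cyclomatic E"
    and good: "\<forall>u v. E u v \<longrightarrow> {u,v} \<notin> B \<longrightarrow> cnj (s u) * \<phi> u v * s v = 1"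
    using ex by blast
  define M where "M = gain_adj_mat E \<phi>"
  define N where "N = (\<chi> i j. cnj (s i) * M$i$j * s j)"
  define AC where "AC = (\<chi> i j. complex_of_real (adj_mat E $i$j))"
  have nz: "s i \<noteq> 0" for i using s1 by (metis norm_zero zero_neq_one)
  have rN: "rank N = rank M" unfolding N_def
    by (rule rank_scale_eq) (use nz in auto)
  have rAC: "rank AC = rank (adj_mat E)" unfolding AC_def by (rule rank_of_real)
  have entry: "N$i$j - AC$i$j \<noteq> 0 \<Longrightarrow> {i,j} \<in> B" for i j
  proof (rule ccontr)
    assume ne: "N$i$j - AC$i$j \<noteq> 0" and nB: "{i,j} \<notin> B"
    show False
    proof (cases "E i j")
      case True
      then have "N$i$j = 1" using good nB by (simp add: N_def M_def gain_adj_mat_def)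
      moreover have "AC$i$j = 1" using True by (simp add: AC_def adj_mat_def)
      ultimately show False using ne by simp
    next
      case False
      then show False using ne by (simp add: N_def M_def gain_adj_mat_def AC_def adj_mat_def)
    qed
  qed
  have finB: "finite B" by (rule finite)
  have r1: "rank (N - AC) \<le> 2 * card B"
    by (rule rank_supp[OF finB]) (use entry in auto)
  have r2: "rank (AC - N) \<le> 2 * card B"
  proof (rule rank_supp[OF finB], intro allI impI)
    fix i j assume "(AC - N)$i$j \<noteq> 0"
    then have "N$i$j - AC$i$j \<noteq> 0" by simp
    then show "{i,j} \<in> B" by (rule entry)
  qed
  have "rank N \<le> rank AC + rank (N - AC)"
    using rank_add_le[of AC "N - AC"] by simp
  moreover have "rank AC \<le> rank N + rank (AC - N)"
    using rank_add_le[of N "AC - N"] by simp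
  ultimately show ?thesis using r1 r2 rN rAC Bc unfolding M_def by linarith
qed

end
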